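(* Let $T>0$, let $r_\alpha,r_\beta,r_v,t_v,\sigma_B,\sigma_W>0$, $\overline{v}_T\in\mathbb{R}$, $\overline{v},f_c,f_d\in C([0,T];\mathbb{R})$, and let $0\le\lambda\le r_\beta\sigma_W^2$. Consider the ODE system on $[0,T]$ $$\begin{cases} \dot\mu_t=\frac{1}{r_\alpha}\mu_t^2+\frac{1}{r_\beta}\eta_t^2-2\eta_t-r_v,\\ \dot\eta_t=\frac{1}{r_\alpha}\mu_t\eta_t+\frac{1}{r_\beta}\rho_t\eta_t-\rho_t-\frac{\lambda}{r_\beta\sigma_W^2}\eta_tf_c(t),\\ \dot\rho_t=\frac{1}{r_\alpha}\eta_t^2+\frac{1}{r_\beta}\rho_t^2-\frac{2\lambda}{r_\beta\sigma_W^2}\rho_tf_c(t)+\big(\frac{\lambda^2}{r_\beta\sigma_W^4}-\frac{\lambda}{\sigma_W^2}\big)f_c^2(t),\\ \dot\gamma_t=\frac{1}{r_\alpha}\mu_t\gamma_t+\frac{1}{r_\beta}\eta_t\theta_t-\theta_t+r_v\overline{v}(t)-\frac{\lambda}{r_\beta\sigma_W^2}\eta_tf_d(t),\\ \dot\theta_t=\frac{1}{r_\alpha}\eta_t\gamma_t+\frac{1}{r_\beta}\rho_t\theta_t-\frac{\lambda}{r_\beta\sigma_W^2}\theta_tf_c(t)-\frac{\lambda}{r_\beta\sigma_W^2}f_d(t)\rho_t+\big(\frac{\lambda^2}{r_\beta\sigma_W^4}-\frac{\lambda}{\sigma_W^2}\big)f_c(t)f_d(t),\\ \dot\xi_t=\frac{1}{2r_\alpha}\gamma_t^2+\frac{1}{2r_\beta}\theta_t^2-\frac12\sigma_B^2\mu_t-\frac12\sigma_W^2\rho_t-\frac{\lambda}{r_\beta\sigma_W^2}f_d(t)\theta_t-\frac{r_v\overline{v}(t)^2}{2}+\big(\frac{\lambda^2}{2r_\beta\sigma_W^4}-\frac{\lambda}{2\sigma_W^2}\big)f_d^2(t),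 \end{cases}$$ with terminal conditions $\mu_T=t_v$, $\eta_T=0$, $\rho_T=0$, $\gamma_T=-t_v\overline{v}_T$, $\theta_T=0$, $\xi_T=\frac{t_v}{2}\overline{v}_T^2$. Suppose $f_c\equiv f_d\equiv0$ or $\lambda=0$. Then the unique solution $(\mu,\eta,\rho,\gamma,\theta,\xi)$ of this system on $[0,T]$ satisfies $\eta\equiv\rho\equiv\theta\equiv0$, and consequently the feedback function $$\hat\beta(t,v,y)=-\frac{\eta_t}{r_\beta}v+\Big(\frac{\lambda}{r_\beta\sigma_W^2}f_c(t)-\frac{\rho_t}{r_\beta}\Big)y+\Big(\frac{\lambda}{r_\beta\sigma_W^2}f_d(t)-\frac{\theta_t}{r_\beta}\Big)$$ satisfies $\hat\beta\equiv0$ on $[0,T]\times\mathbb{R}\times\mathbb{R}$.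
   Context: It is a known fact (which may be assumed) that under the condition $0\le\lambda\le r_\beta\sigma_W^2$ this terminal-value ODE system has a unique global solution on $[0,T]$ for every $T>0$. The system arises from a quadratic ansatz $\mathcal{V}(t,v,y)=\frac{\mu_t}{2}v^2+\eta_tvy+\frac{\rho_t}{2}y^2+\gamma_tv+\theta_ty+\xi_t$ for the value function of a linear-quadratic control problem, and $\hat\beta$ is the resulting optimal feedback for the control $\beta$. *)

theory Defs
  imports "HOL-Analysis.Analysis"
begin

text \<open>The ODE system on [0,T] with terminal conditions. Derivatives are taken
  within the closed interval [0,T] (one-sided at the endpoints).\<close>
definition is_riccati_solution ::
  "real \<Rightarrow> real \<Rightarrow> real \<Rightarrow> real \<Rightarrow> real \<Rightarrow> real \<Rightarrow> real \<Rightarrow> real \<Rightarrow> real \<Rightarrow>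
   (real \<Rightarrow> real) \<Rightarrow> (real \<Rightarrow> real) \<Rightarrow> (real \<Rightarrow> real) \<Rightarrow>
   (real \<Rightarrow> real) \<Rightarrow> (real \<Rightarrow> real) \<Rightarrow> (real \<Rightarrow> real) \<Rightarrow> (real \<Rightarrow> real) \<Rightarrow> (real \<Rightarrow> real) \<Rightarrow> (real \<Rightarrow> real) \<Rightarrow> bool"
where
  "is_riccati_solution T r\<^sub>\<alpha> r\<^sub>\<beta> r\<^sub>v t\<^sub>v \<sigma>\<^sub>B \<sigma>\<^sub>W lam vT vbar fc fd mu eta rho gam theta xi \<longleftrightarrow>
     (\<forall>t\<in>{0..T}.
        (mu has_real_derivative
            (1/r\<^sub>\<alpha> * (mu t)\<^sup>2 + 1/r\<^sub>\<beta> * (eta t)\<^sup>2 - 2 * eta t - r\<^sub>v)) (at t within {0..T}) \<and>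
        (eta has_real_derivative
            (1/r\<^sub>\<alpha> * mu t * eta t + 1/r\<^sub>\<beta> * rho t * eta t - rho t
             - lam / (r\<^sub>\<beta> * \<sigma>\<^sub>W\<^sup>2) * eta t * fc t)) (at t within {0..T}) \<and>
        (rho has_real_derivative
            (1/r\<^sub>\<alpha> * (eta t)\<^sup>2 + 1/r\<^sub>\<beta> * (rho t)\<^sup>2
             - 2 * lam / (r\<^sub>\<beta> * \<sigma>\<^sub>W\<^sup>2) * rho t * fc t
             + (lam\<^sup>2 / (r\<^sub>\<beta> * \<sigma>\<^sub>W ^ 4) - lam / \<sigma>\<^sub>W\<^sup>2) * (fc t)\<^sup>2)) (at t within {0..T}) \<and>
        (gam has_real_derivative
            (1/r\<^sub>\<alpha> * mu t * gam t + 1/r\<^sub>\<beta> * eta t * theta t - theta t + r\<^sub>v * vbar t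
             - lam / (r\<^sub>\<beta> * \<sigma>\<^sub>W\<^sup>2) * eta t * fd t)) (at t within {0..T}) \<and>
        (theta has_real_derivative
            (1/r\<^sub>\<alpha> * eta t * gam t + 1/r\<^sub>\<beta> * rho t * theta t
             - lam / (r\<^sub>\<beta> * \<sigma>\<^sub>W\<^sup>2) * theta t * fc t
             - lam / (r\<^sub>\<beta> * \<sigma>\<^sub>W\<^sup>2) * fd t * rho t
             + (lam\<^sup>2 / (r\<^sub>\<beta> * \<sigma>\<^sub>W ^ 4) - lam / \<sigma>\<^sub>W\<^sup>2) * fc t * fd t)) (at t within {0..T}) \<and>
        (xi has_real_derivative
            (1/(2*r\<^sub>\<alpha>) * (gam t)\<^sup>2 + 1/(2*r\<^sub>\<beta>) * (theta t)\<^sup>2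
             - 1/2 * \<sigma>\<^sub>B\<^sup>2 * mu t - 1/2 * \<sigma>\<^sub>W\<^sup>2 * rho t
             - lam / (r\<^sub>\<beta> * \<sigma>\<^sub>W\<^sup>2) * fd t * theta t
             - r\<^sub>v * (vbar t)\<^sup>2 / 2
             + (lam\<^sup>2 / (2 * r\<^sub>\<beta> * \<sigma>\<^sub>W ^ 4) - lam / (2 * \<sigma>\<^sub>W\<^sup>2)) * (fd t)\<^sup>2)) (at t within {0..T}))
     \<and> mu T = t\<^sub>v \<and> eta T = 0 \<and> rho T = 0 \<and> gam T = - t\<^sub>v * vT \<and> theta T = 0
     \<and> xi T = t\<^sub>v / 2 * vT\<^sup>2"

definition beta_hat ::
  "real \<Rightarrow> real \<Rightarrow> real \<Rightarrow> (real \<Rightarrow> real) \<Rightarrow> (real \<Rightarrow> real) \<Rightarrow>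
   (real \<Rightarrow> real) \<Rightarrow> (real \<Rightarrow> real) \<Rightarrow> (real \<Rightarrow> real) \<Rightarrow> real \<Rightarrow> real \<Rightarrow> real \<Rightarrow> real"
where
  "beta_hat r\<^sub>\<beta> \<sigma>\<^sub>W lam fc fd eta rho theta t v y =
     - eta t / r\<^sub>\<beta> * v + (lam / (r\<^sub>\<beta> * \<sigma>\<^sub>W\<^sup>2) * fc t - rho t / r\<^sub>\<beta>) * y
     + (lam / (r\<^sub>\<beta> * \<sigma>\<^sub>W\<^sup>2) * fd t - theta t / r\<^sub>\<beta>)"

end

theory Submission
  imports Defs
begin

lemma backward_zero:
  fixes E E' :: "real \<Rightarrow> real" and L T :: real
  assumes d: "\<And>t. t \<in> {0..T} \<Longrightarrow> (E has_real_derivative E' t) (at t within {0..T})"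
    and lb: "\<And>t. t \<in> {0..T} \<Longrightarrow> E' t \<ge> - L * E t"
    and nn: "\<And>t. t \<in> {0..T} \<Longrightarrow> E t \<ge> 0"
    and ET: "E T = 0"
    and s: "s \<in> {0..T}"
  shows "E s = 0"
proof -
  define F where "F = (\<lambda>t. exp (L*t) * E t)"
  have dF: "(F has_real_derivative exp (L*t) * (L * E t + E' t)) (at t within {0..T})"
    if "t \<in> {0..T}" for t
    unfolding F_def
    by (rule derivative_eq_intros d that refl)+ (simp add: algebra_simps)
  have cF: "continuous_on {0..T} F" by (rule DERIV_continuous_on[OF dF])
  have "F s \<le> F T"
  proof (rule DERIV_nonneg_imp_increasing_open[of s T F])
    show "s \<le> T" using s by auto
    show "continuous_on {s..T} F" by (rule continuous_on_subset[OF cF]) (use s in auto)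
    fix x assume x: "s < x" "x < T"
    then have xi: "x \<in> interior {0..T}" using s by auto
    have "x \<in> {0..T}" using x s by auto
    have "(F has_real_derivative exp (L*x) * (L * E x + E' x)) (at x)"
      using dF[OF \<open>x \<in> {0..T}\<close>, unfolded at_within_interior[OF xi]] .
    moreover have "exp (L*x) * (L * E x + E' x) \<ge> 0" using lb[OF \<open>x \<in> {0..T}\<close>] by simp
    ultimately show "\<exists>y. (F has_real_derivative y) (at x) \<and> y \<ge> 0" by blast
  qed
  then have "exp (L * s) * E s \<le> 0" by (simp add: F_def ET)
  then have "E s \<le> 0" by (simp add: mult_le_0_iff)
  with nn[OF s] show ?thesis by simp
qed

lemma key:
  fixes a b c m g M ra rb :: real
  assumes ra: "ra > 0" and rb: "rb > 0" and hm: "\<bar>m\<bar> \<le> M" and hb: "\<bar>b\<bar> \<le> M" and hg: "\<bar>g\<bar> \<le> M"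
  shows "2*a*(1/ra*m*a + 1/rb*b*a - b) + 2*b*(1/ra*a^2 + 1/rb*b^2) + 2*c*(1/ra*a*g + 1/rb*b*c)
     \<ge> - (1 + 5*(M/ra) + 2*(M/rb)) * (a^2+b^2+c^2)"
proof -
  define P where "P = M/ra"
  define Q where "Q = M/rb"
  have M0: "M \<ge> 0" using hm by linarith
  have P0: "P \<ge> 0" "Q \<ge> 0" using M0 ra rb by (auto simp: P_def Q_def)
  have sq: "a^2 \<ge> 0" "b^2 \<ge> 0" "c^2 \<ge> 0" by auto
  have h1: "m/ra*a^2 \<ge> -P*a^2"
  proof -
    have "-M/ra \<le> m/ra" by (intro divide_right_mono) (use hm ra in auto)
    then have "(-M/ra)*a^2 \<le> m/ra*a^2" by (rule mult_right_mono) simp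
    then show ?thesis by (simp add: P_def)
  qed
  have h2: "b/rb*a^2 \<ge> -Q*a^2"
  proof -
    have "-M/rb \<le> b/rb" by (intro divide_right_mono) (use hb rb in auto)
    then have "(-M/rb)*a^2 \<le> b/rb*a^2" by (rule mult_right_mono) simp
    then show ?thesis by (simp add: Q_def)
  qed
  have h3: "b/ra*a^2 \<ge> -P*a^2"
  proof -
    have "-M/ra \<le> b/ra" by (intro divide_right_mono) (use hb ra in auto)
    then have "(-M/ra)*a^2 \<le> b/ra*a^2" by (rule mult_right_mono) simp
    then show ?thesis by (simp add: P_def)
  qed
  have h4: "b/rb*b^2 \<ge> -Q*b^2"
  proof -
    have "-M/rb \<le> b/rb" by (intro divide_right_mono) (use hb rb in auto)
    then have "(-M/rb)*b^2 \<le> b/rb*b^2" by (rule mult_right_mono) simp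
    then show ?thesis by (simp add: Q_def)
  qed
  have h6: "b/rb*c^2 \<ge> -Q*c^2"
  proof -
    have "-M/rb \<le> b/rb" by (intro divide_right_mono) (use hb rb in auto)
    then have "(-M/rb)*c^2 \<le> b/rb*c^2" by (rule mult_right_mono) simp
    then show ?thesis by (simp add: Q_def)
  qed
  have h5: "g/ra*(a*c) \<ge> -P*((a^2+c^2)/2)"
  proof -
    have ac: "\<bar>a*c\<bar> \<le> (a^2+c^2)/2"
      using sum_squares_bound[of a c] sum_squares_bound[of a "-c"]
      by (simp add: abs_if power2_eq_square algebra_simps)
    have "\<bar>g/ra\<bar> \<le> P" using hg ra by (simp add: P_def divide_right_mono)
    then have "\<bar>g/ra*(a*c)\<bar> \<le> P*((a^2+c^2)/2)"
      unfolding abs_mult using ac P0 by (intro mult_mono) auto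
    then have "-(g/ra*(a*c)) \<le> P*((a^2+c^2)/2)" by (rule abs_le_D2)
    then show ?thesis by linarith
  qed
  have h7: "a*b \<le> (a^2+b^2)/2" using sum_squares_bound[of a b] by (simp add: power2_eq_square)
  have nn: "P*b^2 \<ge> 0" "P*c^2 \<ge> 0" "Q*b^2 \<ge> 0" "Q*c^2 \<ge> 0" "Q*a^2\<ge>0" "P*a^2 \<ge> 0"
    using P0 by auto
  have eq: "2*a*(1/ra*m*a + 1/rb*b*a - b) + 2*b*(1/ra*a^2 + 1/rb*b^2) + 2*c*(1/ra*a*g + 1/rb*b*c)
     = 2*(m/ra*a^2) + 2*(b/rb*a^2) - 2*(a*b) + 2*(b/ra*a^2) + 2*(b/rb*b^2) + 2*(g/ra*(a*c)) + 2*(b/rb*c^2)"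
    by (simp add: algebra_simps power2_eq_square)
  have eq2: "- (1 + 5*(M/ra) + 2*(M/rb)) * (a^2+b^2+c^2) = -(a^2+b^2+c^2) - 5*(P*a^2) - 5*(P*b^2) - 5*(P*c^2)
     - 2*(Q*a^2) - 2*(Q*b^2) - 2*(Q*c^2)"
    by (simp add: P_def Q_def algebra_simps)
  show ?thesis unfolding eq eq2 using h1 h2 h3 h4 h5 h6 h7 nn sq by argo
qed

theorem corollary1:
  fixes T r\<^sub>\<alpha> r\<^sub>\<beta> r\<^sub>v t\<^sub>v \<sigma>\<^sub>B \<sigma>\<^sub>W lam vT :: real
    and vbar fc fd mu eta rho gam theta xi :: "real \<Rightarrow> real"
  assumes "T > 0"
    and "r\<^sub>\<alpha> > 0" "r\<^sub>\<beta> > 0" "r\<^sub>v > 0" "t\<^sub>v > 0" "\<sigma>\<^sub>B > 0" "\<sigma>\<^sub>W > 0"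
    and "continuous_on {0..T} vbar" "continuous_on {0..T} fc" "continuous_on {0..T} fd"
    and "0 \<le> lam" "lam \<le> r\<^sub>\<beta> * \<sigma>\<^sub>W\<^sup>2"
    and "(\<forall>t\<in>{0..T}. fc t = 0 \<and> fd t = 0) \<or> lam = 0"
    and "is_riccati_solution T r\<^sub>\<alpha> r\<^sub>\<beta> r\<^sub>v t\<^sub>v \<sigma>\<^sub>B \<sigma>\<^sub>W lam vT vbar fc fd mu eta rho gam theta xi"
  shows "(\<forall>t\<in>{0..T}. eta t = 0 \<and> rho t = 0 \<and> theta t = 0)
       \<and> (\<forall>t\<in>{0..T}. \<forall>v y. beta_hat r\<^sub>\<beta> \<sigma>\<^sub>W lam fc fd eta rho theta t v y = 0)"
proof -
  note D = assms(14)[unfolded is_riccati_solution_def]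
  have sw: "\<forall>t\<in>{0..T}. lam * fc t = 0 \<and> lam * fd t = 0" using assms(13) by auto
  define ra where "ra = r\<^sub>\<alpha>"
  define rb where "rb = r\<^sub>\<beta>"
  have ra: "ra > 0" and rb: "rb > 0" using assms by (auto simp: ra_def rb_def)
  define deta where "deta = (\<lambda>t. 1/ra * mu t * eta t + 1/rb * rho t * eta t - rho t)"
  define drho where "drho = (\<lambda>t. 1/ra * (eta t)\<^sup>2 + 1/rb * (rho t)\<^sup>2)"
  define dth where "dth = (\<lambda>t. 1/ra * eta t * gam t + 1/rb * rho t * theta t)"
  have dmu: "\<And>t. t \<in> {0..T} \<Longrightarrow> \<exists>d. (mu has_real_derivative d) (at t within {0..T})"
    using D by blast
  have dgam: "\<And>t. t \<in> {0..T} \<Longrightarrow> \<exists>d. (gam has_real_derivative d) (at t within {0..T})"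
    using D by blast
  have deta: "(eta has_real_derivative deta t) (at t within {0..T})" if t: "t \<in> {0..T}" for t
  proof -
    have z: "lam * fc t = 0" "lam * fd t = 0" using sw t by auto
    have "(eta has_real_derivative
            (1/r\<^sub>\<alpha> * mu t * eta t + 1/r\<^sub>\<beta> * rho t * eta t - rho t
             - lam / (r\<^sub>\<beta> * \<sigma>\<^sub>W\<^sup>2) * eta t * fc t)) (at t within {0..T})"
      using D t by blast
    note h = this
    have e1: "lam / (r\<^sub>\<beta> * \<sigma>\<^sub>W\<^sup>2) * eta t * fc t = 0" using z by auto
    show ?thesis using h unfolding e1 by (simp add: deta_def ra_def rb_def)
  qed
  have drho: "(rho has_real_derivative drho t) (at t within {0..T})" if t: "t \<in> {0..T}" for t
  proof -
    have z: "lam * fc t = 0" "lam * fd t = 0" using sw t by auto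
    have "(rho has_real_derivative
            (1/r\<^sub>\<alpha> * (eta t)\<^sup>2 + 1/r\<^sub>\<beta> * (rho t)\<^sup>2
             - 2 * lam / (r\<^sub>\<beta> * \<sigma>\<^sub>W\<^sup>2) * rho t * fc t
             + (lam\<^sup>2 / (r\<^sub>\<beta> * \<sigma>\<^sub>W ^ 4) - lam / \<sigma>\<^sub>W\<^sup>2) * (fc t)\<^sup>2)) (at t within {0..T})"
      using D t by blast
    note h = this
    have e1: "2 * lam / (r\<^sub>\<beta> * \<sigma>\<^sub>W\<^sup>2) * rho t * fc t = 0" using z by auto
    have e2: "(lam\<^sup>2 / (r\<^sub>\<beta> * \<sigma>\<^sub>W ^ 4) - lam / \<sigma>\<^sub>W\<^sup>2) * (fc t)\<^sup>2 = 0"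
      using z by (auto simp: power2_eq_square)
    show ?thesis using h unfolding e1 e2 by (simp add: drho_def ra_def rb_def)
  qed
  have dth: "(theta has_real_derivative dth t) (at t within {0..T})" if t: "t \<in> {0..T}" for t
  proof -
    have z: "lam * fc t = 0" "lam * fd t = 0" using sw t by auto
    have "(theta has_real_derivative
            (1/r\<^sub>\<alpha> * eta t * gam t + 1/r\<^sub>\<beta> * rho t * theta t
             - lam / (r\<^sub>\<beta> * \<sigma>\<^sub>W\<^sup>2) * theta t * fc t
             - lam / (r\<^sub>\<beta> * \<sigma>\<^sub>W\<^sup>2) * fd t * rho t
             + (lam\<^sup>2 / (r\<^sub>\<beta> * \<sigma>\<^sub>W ^ 4) - lam / \<sigma>\<^sub>W\<^sup>2) * fc t * fd t)) (at t within {0..T})"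
      using D t by blast
    note h = this
    have e1: "lam / (r\<^sub>\<beta> * \<sigma>\<^sub>W\<^sup>2) * theta t * fc t = 0" using z by auto
    have e3: "lam / (r\<^sub>\<beta> * \<sigma>\<^sub>W\<^sup>2) * fd t * rho t = 0" using z by auto
    have e2: "(lam\<^sup>2 / (r\<^sub>\<beta> * \<sigma>\<^sub>W ^ 4) - lam / \<sigma>\<^sub>W\<^sup>2) * fc t * fd t = 0"
      using z by (auto simp: power2_eq_square)
    show ?thesis using h unfolding e1 e2 e3 by (simp add: dth_def ra_def rb_def)
  qed
  have bnd: "\<exists>B. \<forall>t\<in>{0..T}. \<bar>f t\<bar> \<le> B"
    if ex: "\<And>t. t \<in> {0..T} \<Longrightarrow> \<exists>d. (f has_real_derivative d) (at t within {0..T})" for f :: "real \<Rightarrow> real"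
  proof -
    have "\<forall>t\<in>{0..T}. \<exists>d. (f has_real_derivative d) (at t within {0..T})" using ex by blast
    then obtain d where "\<forall>t\<in>{0..T}. (f has_real_derivative d t) (at t within {0..T})"
      by (metis bchoice)
    then have "\<And>t. t \<in> {0..T} \<Longrightarrow> (f has_real_derivative d t) (at t within {0..T})" by blast
    then have "continuous_on {0..T} f" by (rule DERIV_continuous_on)
    then have "bounded (f ` {0..T})"
      by (intro compact_imp_bounded compact_continuous_image) auto
    then show ?thesis unfolding bounded_iff by auto
  qed
  obtain B1 where B1: "\<forall>t\<in>{0..T}. \<bar>mu t\<bar> \<le> B1" using bnd[OF dmu] by blast
  obtain B2 where B2: "\<forall>t\<in>{0..T}. \<bar>rho t\<bar> \<le> B2" using bnd[of rho] drho by blast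
  obtain B3 where B3: "\<forall>t\<in>{0..T}. \<bar>gam t\<bar> \<le> B3" using bnd[OF dgam] by blast
  define M where "M = max B1 (max B2 B3)"
  define E where "E = (\<lambda>t. (eta t)\<^sup>2 + (rho t)\<^sup>2 + (theta t)\<^sup>2)"
  define E' where "E' = (\<lambda>t. 2*eta t*deta t + 2*rho t*drho t + 2*theta t*dth t)"
  have dE: "(E has_real_derivative E' t) (at t within {0..T})" if t: "t \<in> {0..T}" for t
    unfolding E_def E'_def
    by (rule derivative_eq_intros deta[OF t] drho[OF t] dth[OF t] refl)+ (simp add: algebra_simps)
  have lbE: "E' t \<ge> - (1 + 5*(M/ra) + 2*(M/rb)) * E t" if t: "t \<in> {0..T}" for t
  proof -
    have "\<bar>mu t\<bar> \<le> M" "\<bar>rho t\<bar> \<le> M" "\<bar>gam t\<bar> \<le> M" using bspec[OF B1 t] bspec[OF B2 t] bspec[OF B3 t] by (auto simp: M_def le_max_iff_disj)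
    from key[OF ra rb this, of "eta t" "theta t"] show ?thesis
      by (simp add: E_def E'_def deta_def drho_def dth_def)
  qed
  have ET: "E T = 0" using D by (simp add: E_def)
  have Z: "E s = 0" if s: "s \<in> {0..T}" for s
    by (rule backward_zero[OF dE lbE _ ET s]) (auto simp: E_def)
  have Z2: "eta t = 0 \<and> rho t = 0 \<and> theta t = 0" if t: "t \<in> {0..T}" for t
  proof -
    have "(eta t)\<^sup>2 + (rho t)\<^sup>2 + (theta t)\<^sup>2 = 0" using Z[OF t] by (simp add: E_def)
    then show ?thesis by (simp add: sum_power2_eq_zero_iff add_nonneg_eq_0_iff)
  qed
  have "\<forall>t\<in>{0..T}. \<forall>v y. beta_hat r\<^sub>\<beta> \<sigma>\<^sub>W lam fc fd eta rho theta t v y = 0"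
  proof (intro ballI allI)
    fix t v y assume t: "t \<in> {0..T}"
    have z: "lam * fc t = 0" "lam * fd t = 0" using sw t by auto
    show "beta_hat r\<^sub>\<beta> \<sigma>\<^sub>W lam fc fd eta rho theta t v y = 0"
      using Z2[OF t] z by (auto simp: beta_hat_def)
  qed
  with Z2 show ?thesis by blast
qed

end
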